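(* Let $\Omega \subseteq \mathbb{R}^d$ be a bounded open convex set and $K \subseteq \mathbb{R}^d$ a compact set such that the origin belongs to the interior of $K$. Let $\mu_+,\mu_-$ be Borel probability measures on $\Omega$. Then $\mathrm{VDC}_K(\mu_+\|\mu_-) := \sup_{u \in \mathcal{A}} \int_\Omega u\, d(\mu_- - \mu_+) = 0$ if and only if $\int_\Omega u \, d(\mu_- - \mu_+) \leq 0$ for every convex function $u$ on $\Omega$ (i.e. $\mu_- \preceq \mu_+$ in the Choquet order).
   Context: $\mathcal{A} = \{ u : \Omega \to \mathbb{R} \,:\, u \text{ convex and } \nabla u \in K \text{ almost everywhere}\}$. For measures with finite first moment, $\mu \preceq \nu$ (Choquet or convex order) means $\int f\, d\mu \leq \int f\, d\nu$ for every convex function $f$. *)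

theory Defs
  imports "HOL-Probability.Probability"
begin

definition admissible :: "'a::euclidean_space set \<Rightarrow> 'a set \<Rightarrow> ('a \<Rightarrow> real) set" where
  "admissible \<Omega> K = {u. convex_on \<Omega> u \<and>
     (AE x in lebesgue. x \<in> \<Omega> \<longrightarrow> (\<exists>g\<in>K. (u has_derivative (\<lambda>h. g \<bullet> h)) (at x)))}"

definition VDC :: "'a::euclidean_space set \<Rightarrow> 'a set \<Rightarrow> 'a measure \<Rightarrow> 'a measure \<Rightarrow> ereal" where
  "VDC \<Omega> K \<mu>p \<mu>m = (SUP u\<in>admissible \<Omega> K. ereal (integral\<^sup>L \<mu>m u - integral\<^sup>L \<mu>p u))"

end

theory Submission
  imports Defs
begin

lemma subgrad:
  fixes u :: "'a::euclidean_space \<Rightarrow> real"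
  assumes "open \<Omega>" "convex_on \<Omega> u" "x0 \<in> \<Omega>"
  shows "\<exists>s. \<forall>x\<in>\<Omega>. u x0 + s \<bullet> (x - x0) \<le> u x"
proof -
  define T where "T = {(x,t). x \<in> \<Omega> \<and> u x < t}"
  have cvxO: "convex \<Omega>" using assms(2) convex_on_def by blast
  have "convex T"
    unfolding convex_def T_def
  proof (clarsimp)
    fix x t y r and a b :: real
    assume h: "x \<in> \<Omega>" "u x < t" "y \<in> \<Omega>" "u y < r" "0 \<le> a" "0 \<le> b" "a + b = 1"
    have m: "a *\<^sub>R x + b *\<^sub>R y \<in> \<Omega>" using cvxO h unfolding convex_def by blast
    have ab1: "a = 1 - b" using h by simp
    have "u ((1-b) *\<^sub>R x + b *\<^sub>R y) \<le> (1-b) * u x + b * u y"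
      using convex_onD[OF assms(2), of b x y] h by simp
    then have "u (a *\<^sub>R x + b *\<^sub>R y) \<le> a * u x + b * u y" using ab1 by simp
    also have "\<dots> < a * t + b * r"
    proof (cases "a = 0")
      case True then show ?thesis using h by simp
    next
      case False then have "a > 0" using h by simp
      then have "a * u x < a * t" using h by simp
      moreover have "b * u y \<le> b * r" using h by (simp add: mult_left_mono)
      ultimately show ?thesis by simp
    qed
    finally show "a *\<^sub>R x + b *\<^sub>R y \<in> \<Omega> \<and> u (a *\<^sub>R x + b *\<^sub>R y) < a * t + b * r" using m by simp
  qed
  moreover have "T \<noteq> {}" using assms(3) unfolding T_def by (auto intro!: exI[of _ "u x0 + 1"])
  moreover have "{(x0, u x0)} \<inter> T = {}" unfolding T_def by auto
  ultimately obtain a b where ab: "a \<noteq> 0" "\<forall>z\<in>{(x0, u x0)}. a \<bullet> z \<le> b" "\<forall>z\<in>T. a \<bullet> z \<ge> b"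
    using separating_hyperplane_sets[of "{(x0, u x0)}" T] by auto
  obtain a1 \<alpha> where a: "a = (a1, \<alpha>)" by (cases a)
  have key: "a1 \<bullet> x0 + \<alpha> * u x0 \<le> a1 \<bullet> x + \<alpha> * t" if "x \<in> \<Omega>" "u x < t" for x t
  proof -
    have "(x,t) \<in> T" using that T_def by auto
    then show ?thesis using ab a by force
  qed
  have "\<alpha> \<ge> 0" using key[OF assms(3), of "u x0 + 1"] by (simp add: algebra_simps)
  moreover have "\<alpha> \<noteq> 0"
  proof
    assume a0: "\<alpha> = 0"
    then have "a1 \<noteq> 0" using ab a by (auto simp: zero_prod_def)
    obtain e where e: "e > 0" "ball x0 e \<subseteq> \<Omega>" using assms(1,3) open_contains_ball by blast
    define \<delta> where "\<delta> = e / (2 * norm a1)"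
    have dpos: "\<delta> > 0" using e \<open>a1 \<noteq> 0\<close> by (simp add: \<delta>_def)
    have "dist x0 (x0 - \<delta> *\<^sub>R a1) = \<delta> * norm a1" using dpos by (simp add: dist_norm)
    also have "\<dots> < e" using e \<open>a1 \<noteq> 0\<close> by (simp add: \<delta>_def)
    finally have "x0 - \<delta> *\<^sub>R a1 \<in> \<Omega>" using e by auto
    from key[OF this, of "u (x0 - \<delta> *\<^sub>R a1) + 1"] a0
    have "a1 \<bullet> x0 \<le> a1 \<bullet> x0 - \<delta> * (a1 \<bullet> a1)" by (simp add: inner_diff_right)
    moreover have "a1 \<bullet> a1 > 0" using \<open>a1 \<noteq> 0\<close> by simp
    ultimately show False using dpos by (smt (verit) mult_pos_pos)
  qed
  ultimately have apos: "\<alpha> > 0" by simp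
  have key2: "a1 \<bullet> x0 + \<alpha> * u x0 \<le> a1 \<bullet> x + \<alpha> * u x" if "x \<in> \<Omega>" for x
  proof (rule ccontr)
    assume "\<not> ?thesis"
    then have gt: "a1 \<bullet> x0 + \<alpha> * u x0 - (a1 \<bullet> x + \<alpha> * u x) > 0" by simp
    define m where "m = (a1 \<bullet> x0 + \<alpha> * u x0 - (a1 \<bullet> x + \<alpha> * u x)) / (2 * \<alpha>)"
    have "m > 0" using gt apos by (simp add: m_def)
    have "\<alpha> * m = (a1 \<bullet> x0 + \<alpha> * u x0 - (a1 \<bullet> x + \<alpha> * u x)) / 2"
      using apos by (simp add: m_def)
    moreover have "a1 \<bullet> x0 + \<alpha> * u x0 \<le> a1 \<bullet> x + \<alpha> * (u x + m)"
      using key[OF that, of "u x + m"] \<open>m > 0\<close> by simp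
    ultimately show False using gt by (simp add: algebra_simps)
  qed
  show ?thesis
  proof (intro exI ballI)
    fix x assume "x \<in> \<Omega>"
    have "u x0 + (- (1/\<alpha>) *\<^sub>R a1) \<bullet> (x - x0) = u x0 - (a1 \<bullet> x - a1 \<bullet> x0) / \<alpha>"
      by (simp add: inner_diff_right diff_divide_distrib)
    also have "\<dots> \<le> u x"
      using key2[OF \<open>x \<in> \<Omega>\<close>] apos by (simp add: field_simps)
    finally show "u x0 + (- (1/\<alpha>) *\<^sub>R a1) \<bullet> (x - x0) \<le> u x" .
  qed
qed

lemma maxaff_adm:
  fixes s :: "nat \<Rightarrow> 'a::euclidean_space" and c :: "nat \<Rightarrow> real"
  assumes sK: "\<And>k. k \<le> n \<Longrightarrow> s k \<in> K" and cvx: "convex \<Omega>"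
  shows "(\<lambda>x. Max ((\<lambda>k. s k \<bullet> x + c k) ` {..n})) \<in> admissible \<Omega> K"
proof -
  define f where "f = (\<lambda>x. Max ((\<lambda>k. s k \<bullet> x + c k) ` {..n}))"
  have fge: "s k \<bullet> x + c k \<le> f x" if "k \<le> n" for k x
    unfolding f_def using that by (intro Max_ge) auto
  have fin: "\<exists>k\<le>n. f x = s k \<bullet> x + c k" for x
  proof -
    have "f x \<in> (\<lambda>k. s k \<bullet> x + c k) ` {..n}" unfolding f_def by (intro Max_in) auto
    then show ?thesis by auto
  qed
  have "convex_on \<Omega> f"
  proof (rule convex_onI[OF _ cvx])
    fix t x y assume t: "0 < (t::real)" "t < 1"
    obtain k where k: "k \<le> n" "f ((1 - t) *\<^sub>R x + t *\<^sub>R y) = s k \<bullet> ((1 - t) *\<^sub>R x + t *\<^sub>R y) + c k"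
      using fin by blast
    have "s k \<bullet> ((1 - t) *\<^sub>R x + t *\<^sub>R y) + c k = (1 - t) * (s k \<bullet> x + c k) + t * (s k \<bullet> y + c k)"
      by (simp add: inner_add_right algebra_simps)
    also have "\<dots> \<le> (1 - t) * f x + t * f y"
      using fge[OF k(1)] t by (intro add_mono mult_left_mono) auto
    finally show "f ((1 - t) *\<^sub>R x + t *\<^sub>R y) \<le> (1 - t) * f x + t * f y" using k by simp
  qed
  moreover
  define N where "N = (\<Union>p\<in>{(i,j). i \<le> n \<and> j \<le> n \<and> (s i, c i) \<noteq> (s j, c j)}.
                        {x. (s (fst p) - s (snd p)) \<bullet> x = c (snd p) - c (fst p)})"
  have "negligible N"
    unfolding N_def
  proof (rule negligible_Union)
    show "finite ((\<lambda>p. {x. (s (fst p) - s (snd p)) \<bullet> x = c (snd p) - c (fst p)}) `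
           {(i, j). i \<le> n \<and> j \<le> n \<and> (s i, c i) \<noteq> (s j, c j)})"
      by (rule finite_imageI, rule finite_subset[of _ "{..n} \<times> {..n}"]) auto
  next
    fix T assume "T \<in> (\<lambda>p. {x. (s (fst p) - s (snd p)) \<bullet> x = c (snd p) - c (fst p)}) `
           {(i, j). i \<le> n \<and> j \<le> n \<and> (s i, c i) \<noteq> (s j, c j)}"
    then obtain p where p: "p \<in> {(i, j). i \<le> n \<and> j \<le> n \<and> (s i, c i) \<noteq> (s j, c j)}"
      "T = {x. (s (fst p) - s (snd p)) \<bullet> x = c (snd p) - c (fst p)}" by blast
    obtain i j where ij: "p = (i, j)" by (cases p)
    have ne: "(s i, c i) \<noteq> (s j, c j)" using p(1) ij by simp
    have T: "T = {x. (s i - s j) \<bullet> x = c j - c i}" using p(2) ij by simp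
    from ne have "s i - s j \<noteq> 0 \<or> c j - c i \<noteq> 0" by auto
    then show "negligible T" unfolding T by (rule negligible_hyperplane)
  qed
  then have Nnull: "N \<in> null_sets lebesgue" using negligible_iff_null_sets by blast
  have "x \<in> \<Omega> \<longrightarrow> (\<exists>g\<in>K. (f has_derivative (\<lambda>h. g \<bullet> h)) (at x))" if "x \<notin> N" for x
  proof -
    obtain i where i: "i \<le> n" "f x = s i \<bullet> x + c i" using fin by blast
    have ev: "\<forall>\<^sub>F y in at x. s j \<bullet> y + c j \<le> s i \<bullet> y + c i" if j: "j \<le> n" for j
    proof (cases "(s i, c i) = (s j, c j)")
      case True then show ?thesis by auto
    next
      case False
      have mem: "(i,j) \<in> {(i,j). i \<le> n \<and> j \<le> n \<and> (s i, c i) \<noteq> (s j, c j)}" using i j False by simp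
      have "x \<in> N" if "x \<in> {x. (s i - s j) \<bullet> x = c j - c i}"
        unfolding N_def by (rule UN_I[OF mem]) (use that in simp)
      then have "x \<notin> {x. (s i - s j) \<bullet> x = c j - c i}" using \<open>x \<notin> N\<close> by blast
      then have "s j \<bullet> x + c j \<noteq> s i \<bullet> x + c i" by (auto simp: inner_diff_left algebra_simps)
      moreover have "s j \<bullet> x + c j \<le> s i \<bullet> x + c i" using fge[OF j, of x] i by simp
      ultimately have lt: "0 < (s i - s j) \<bullet> x + (c i - c j)" by (simp add: inner_diff_left)
      have "((\<lambda>y. (s i - s j) \<bullet> y + (c i - c j)) \<longlongrightarrow> (s i - s j) \<bullet> x + (c i - c j)) (at x)"
        by (intro tendsto_intros)
      from order_tendstoD(1)[OF this lt]
      show ?thesis by eventually_elim (simp add: inner_diff_left)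
    qed
    have "\<forall>\<^sub>F y in at x. \<forall>j\<in>{..n}. s j \<bullet> y + c j \<le> s i \<bullet> y + c i"
      using ev by (intro eventually_ball_finite) auto
    then have evf: "\<forall>\<^sub>F y in at x. s i \<bullet> y + c i = f y"
    proof eventually_elim
      case (elim y)
      have "f y \<le> s i \<bullet> y + c i" unfolding f_def using elim by (subst Max_le_iff) auto
      then show ?case using fge[OF i(1), of y] by simp
    qed
    have "((\<lambda>y. s i \<bullet> y + c i) has_derivative (\<lambda>h. s i \<bullet> h)) (at x)"
      by (auto intro!: derivative_eq_intros)
    then have "(f has_derivative (\<lambda>h. s i \<bullet> h)) (at x)"
      by (rule has_derivative_transform_eventually[OF _ evf]) (use i in auto)
    then show ?thesis using sK[OF i(1)] by blast
  qed
  then have "AE x in lebesgue. x \<in> \<Omega> \<longrightarrow> (\<exists>g\<in>K. (f has_derivative (\<lambda>h. g \<bullet> h)) (at x))"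
    by (intro AE_I'[OF Nnull]) auto
  ultimately show ?thesis unfolding admissible_def f_def by simp
qed

lemma tangent_ineq:
  fixes u :: "'a::euclidean_space \<Rightarrow> real"
  assumes "open \<Omega>" "convex_on \<Omega> u" "z \<in> \<Omega>" "y \<in> \<Omega>"
    and d: "(u has_derivative (\<lambda>h. g \<bullet> h)) (at z)"
  shows "u z + g \<bullet> (y - z) \<le> u y"
proof -
  have cvxO: "convex \<Omega>" using assms(2) convex_on_def by blast
  define A where "A = {t::real. z + t *\<^sub>R (y - z) \<in> \<Omega>}"
  define f where "f = (\<lambda>t. u (z + t *\<^sub>R (y - z)))"
  have eqA: "z + t *\<^sub>R (y - z) = (1 - t) *\<^sub>R z + t *\<^sub>R y" for t
    by (simp add: algebra_simps)
  have cA: "convex A"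
    unfolding convex_def A_def
  proof clarsimp
    fix x r a b :: real assume h: "z + x *\<^sub>R (y - z) \<in> \<Omega>" "z + r *\<^sub>R (y - z) \<in> \<Omega>" "0 \<le> a" "0 \<le> b" "a + b = 1"
    have "a *\<^sub>R (z + x *\<^sub>R (y - z)) + b *\<^sub>R (z + r *\<^sub>R (y - z)) \<in> \<Omega>"
      using cvxO h unfolding convex_def by blast
    moreover have "a *\<^sub>R (z + x *\<^sub>R (y - z)) + b *\<^sub>R (z + r *\<^sub>R (y - z)) = z + (a * x + b * r) *\<^sub>R (y - z)"
      using h(5) by (simp add: algebra_simps flip: scaleR_add_left)
    ultimately show "z + (a * x + b * r) *\<^sub>R (y - z) \<in> \<Omega>" by simp
  qed
  have "convex_on A f"
  proof (rule convex_onI[OF _ cA])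
    fix t x r :: real assume t: "0 < t" "t < 1" and xr: "x \<in> A" "r \<in> A"
    have "z + ((1 - t) * x + t * r) *\<^sub>R (y - z) = (1 - t) *\<^sub>R (z + x *\<^sub>R (y - z)) + t *\<^sub>R (z + r *\<^sub>R (y - z))"
      by (simp add: algebra_simps)
    then have "f ((1 - t) *\<^sub>R x + t *\<^sub>R r) = u ((1 - t) *\<^sub>R (z + x *\<^sub>R (y - z)) + t *\<^sub>R (z + r *\<^sub>R (y - z)))"
      unfolding f_def by simp
    also have "\<dots> \<le> (1 - t) * f x + t * f r"
      unfolding f_def using xr t by (intro convex_onD[OF assms(2)]) (auto simp: A_def)
    finally show "f ((1 - t) *\<^sub>R x + t *\<^sub>R r) \<le> (1 - t) * f x + t * f r" .
  qed
  moreover have "connected A" using cA convex_connected by blast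
  moreover have "open A"
  proof -
    have "continuous_on UNIV (\<lambda>t::real. z + t *\<^sub>R (y - z))" by (intro continuous_intros)
    then have "open ((\<lambda>t::real. z + t *\<^sub>R (y - z)) -` \<Omega>)"
      using assms(1) by (simp add: open_vimage)
    then show ?thesis unfolding A_def vimage_def by simp
  qed
  then have "0 \<in> interior A" using assms(3) by (simp add: A_def interior_open)
  moreover have "1 \<in> A" using assms(4) by (simp add: A_def)
  moreover have "(f has_field_derivative (g \<bullet> (y - z))) (at 0 within A)"
  proof -
    have l: "((\<lambda>t::real. z + t *\<^sub>R (y - z)) has_derivative (\<lambda>h. h *\<^sub>R (y - z))) (at 0)"
      by (auto intro!: derivative_eq_intros)
    have d': "(u has_derivative (\<lambda>h. g \<bullet> h)) (at (z + 0 *\<^sub>R (y - z)))" using d by simp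
    have "(f has_derivative (\<lambda>h. g \<bullet> (h *\<^sub>R (y - z)))) (at 0)"
      unfolding f_def using diff_chain_at[OF l d'] by (simp add: o_def)
    moreover have "(\<lambda>h. g \<bullet> (h *\<^sub>R (y - z))) = (*) (g \<bullet> (y - z))"
      by (auto simp: fun_eq_iff)
    ultimately have "(f has_field_derivative (g \<bullet> (y - z))) (at 0)"
      by (simp add: has_field_derivative_def)
    then show ?thesis by (rule has_field_derivative_at_within)
  qed
  ultimately have "f 1 - f 0 \<ge> (g \<bullet> (y - z)) * (1 - 0)"
    by (intro convex_on_imp_above_tangent) auto
  then show ?thesis unfolding f_def by simp
qed

lemma adm_bounded:
  fixes u :: "'a::euclidean_space \<Rightarrow> real"
  assumes "bounded \<Omega>" "open \<Omega>" "\<Omega> \<noteq> {}" "compact K" "u \<in> admissible \<Omega> K"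
  shows "\<exists>C. \<forall>x\<in>\<Omega>. \<bar>u x\<bar> \<le> C"
proof -
  have cu: "convex_on \<Omega> u" and ae: "AE x in lebesgue. x \<in> \<Omega> \<longrightarrow> (\<exists>g\<in>K. (u has_derivative (\<lambda>h. g \<bullet> h)) (at x))"
    using assms(5) unfolding admissible_def by auto
  have cont: "continuous_on \<Omega> u" using convex_on_continuous[OF assms(2) cu] .
  obtain R where R: "\<forall>g\<in>K. norm g \<le> R" using compact_imp_bounded[OF assms(4)] bounded_iff by blast
  obtain B where B: "\<forall>x\<in>\<Omega>. norm x \<le> B" using assms(1) bounded_iff by blast
  define D where "D = {x\<in>\<Omega>. \<exists>g\<in>K. (u has_derivative (\<lambda>h. g \<bullet> h)) (at x)}"
  obtain N where N: "N \<in> null_sets lebesgue" "{x. \<not> (x \<in> \<Omega> \<longrightarrow> (\<exists>g\<in>K. (u has_derivative (\<lambda>h. g \<bullet> h)) (at x)))} \<subseteq> N"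
  proof -
    obtain N where N: "{x \<in> space lebesgue. \<not> (x \<in> \<Omega> \<longrightarrow> (\<exists>g\<in>K. (u has_derivative (\<lambda>h. g \<bullet> h)) (at x)))} \<subseteq> N"
      "emeasure lebesgue N = 0" "N \<in> sets lebesgue" using ae by (rule AE_E)
    have "N \<in> null_sets lebesgue" using N(2,3) by (rule null_setsI)
    then show ?thesis using that[of N] N(1) by simp
  qed
  have dense: "\<exists>z\<in>D. dist z x < e" if "x \<in> \<Omega>" "e > 0" for x e
  proof (rule ccontr)
    assume "\<not> ?thesis"
    then have "\<forall>z\<in>ball x e \<inter> \<Omega>. \<not> (\<exists>g\<in>K. (u has_derivative (\<lambda>h. g \<bullet> h)) (at z))"
      unfolding D_def by (auto simp: dist_commute)
    then have "ball x e \<inter> \<Omega> \<subseteq> N" using N(2) by blast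
    then have "negligible (ball x e \<inter> \<Omega>)" using N(1) negligible_iff_null_sets negligible_subset by blast
    moreover have "open (ball x e \<inter> \<Omega>)" using assms(2) by auto
    moreover have "x \<in> ball x e \<inter> \<Omega>" using that by simp
    then have "ball x e \<inter> \<Omega> \<noteq> {}" by blast
    ultimately show False using open_not_negligible by blast
  qed
  have tang: "u z - R * (2 * B) \<le> u y" if zy: "z \<in> D" "y \<in> \<Omega>" for z y
  proof -
    obtain g where g: "g \<in> K" "(u has_derivative (\<lambda>h. g \<bullet> h)) (at z)" "z \<in> \<Omega>" using zy(1) unfolding D_def by blast
    have "\<bar>g \<bullet> (y - z)\<bar> \<le> norm g * norm (y - z)" by (rule Cauchy_Schwarz_ineq2)
    also have "\<dots> \<le> R * (2 * B)"
    proof (rule mult_mono)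
      show "norm g \<le> R" using R g by auto
      have "norm (y - z) \<le> norm y + norm z" by (rule norm_triangle_ineq4)
      moreover have "norm y \<le> B" "norm z \<le> B" using B zy(2) g(3) by auto
      ultimately show "norm (y - z) \<le> 2 * B" by linarith
      have "norm g \<le> R" using R g(1) by blast
      then show "0 \<le> R" using norm_ge_zero[of g] by linarith
    qed simp
    finally show ?thesis using tangent_ineq[OF assms(2) cu g(3) zy(2) g(2)] by linarith
  qed
  obtain x0 where "x0 \<in> \<Omega>" using assms(3) by blast
  then obtain z0 where z0: "z0 \<in> D" using dense[of x0 1] by auto
  have lower: "u z0 - R * (2 * B) \<le> u y" if "y \<in> \<Omega>" for y using tang[OF z0 that] .
  have upper: "u y \<le> u z0 + R * (2 * B)" if yO: "y \<in> \<Omega>" for y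
  proof (rule ccontr)
    assume "\<not> ?thesis"
    then have gt: "u y - (u z0 + R * (2 * B)) > 0" by simp
    have "\<forall>e>0. \<exists>d>0. \<forall>x'\<in>\<Omega>. dist x' y < d \<longrightarrow> dist (u x') (u y) < e"
      using cont yO unfolding continuous_on_iff by simp
    then obtain d where d: "d > 0" "\<forall>x'\<in>\<Omega>. dist x' y < d \<longrightarrow> dist (u x') (u y) < u y - (u z0 + R * (2 * B))"
      using gt by blast
    have zO: "z \<in> \<Omega>" if "z \<in> D" for z using that unfolding D_def by simp
    obtain z where z: "z \<in> D" "dist z y < d" using dense[OF yO d(1)] by blast
    have "u z \<le> u z0 + R * (2 * B)" using tang[OF z(1) zO[OF z0]] by simp
    moreover have "dist (u z) (u y) < u y - (u z0 + R * (2 * B))" using d(2) z zO[OF z(1)] by blast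
    ultimately show False by (simp add: dist_real_def)
  qed
  have "\<bar>u y\<bar> \<le> \<bar>u z0\<bar> + R * (2 * B)" if "y \<in> \<Omega>" for y
    using lower[OF that] upper[OF that] by linarith
  then show ?thesis by blast
qed

lemma int_bounded_cont:
  fixes f :: "'a::euclidean_space \<Rightarrow> real"
  assumes "prob_space M" "sets M = sets (restrict_space borel \<Omega>)"
    and "continuous_on \<Omega> f" "\<forall>x\<in>\<Omega>. \<bar>f x\<bar> \<le> C"
  shows "integrable M f"
proof -
  interpret prob_space M by fact
  have sp: "space M = \<Omega>" using sets_eq_imp_space_eq[OF assms(2)] by (simp add: space_restrict_space)
  have "f \<in> borel_measurable (restrict_space borel \<Omega>)"
    by (rule borel_measurable_continuous_on_restrict[OF assms(3)])
  then have "f \<in> borel_measurable M" using measurable_cong_sets[OF assms(2) refl] by blast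
  moreover have "AE x in M. norm (f x) \<le> C" using assms(4) sp by (intro AE_I2) auto
  ultimately show ?thesis using integrable_const_bound by blast
qed

lemma cont_Max:
  fixes s :: "nat \<Rightarrow> 'a::euclidean_space" and c :: "nat \<Rightarrow> real"
  shows "continuous_on UNIV (\<lambda>x. Max ((\<lambda>k. s k \<bullet> x + c k) ` {..n}))"
proof (induction n)
  case 0 then show ?case by (simp add: continuous_intros)
next
  case (Suc n)
  have eq: "(\<lambda>x. Max ((\<lambda>k. s k \<bullet> x + c k) ` {..Suc n})) =
            (\<lambda>x. max (s (Suc n) \<bullet> x + c (Suc n)) (Max ((\<lambda>k. s k \<bullet> x + c k) ` {..n})))"
    by (simp add: atMost_Suc Max_insert)
  show ?case unfolding eq by (intro continuous_on_max Suc continuous_intros)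
qed

lemma space_eq:
  assumes "sets M = sets (restrict_space borel \<Omega>)"
  shows "space M = \<Omega>"
  using sets_eq_imp_space_eq[OF assms] by (simp add: space_restrict_space)

lemma meas_cont:
  fixes f :: "'a::euclidean_space \<Rightarrow> real"
  assumes "sets M = sets (restrict_space borel \<Omega>)" "continuous_on \<Omega> f"
  shows "f \<in> borel_measurable M"
proof -
  have "f \<in> borel_measurable (restrict_space borel \<Omega>)"
    by (rule borel_measurable_continuous_on_restrict[OF assms(2)])
  then show ?thesis using measurable_cong_sets[OF assms(1) refl] by blast
qed

lemma dc_lemma:
  fixes u a :: "'a::euclidean_space \<Rightarrow> real" and v :: "nat \<Rightarrow> 'a \<Rightarrow> real"
  assumes "sets M = sets (restrict_space borel \<Omega>)" "integrable M u" "integrable M a"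
    and "\<And>n. continuous_on \<Omega> (v n)"
    and "\<And>x. x \<in> \<Omega> \<Longrightarrow> (\<lambda>n. v n x) \<longlonglongrightarrow> u x"
    and "\<And>n x. x \<in> \<Omega> \<Longrightarrow> a x \<le> v n x" "\<And>n x. x \<in> \<Omega> \<Longrightarrow> v n x \<le> u x"
  shows "(\<lambda>n. integral\<^sup>L M (v n)) \<longlonglongrightarrow> integral\<^sup>L M u"
proof (rule integral_dominated_convergence[where w = "\<lambda>x. \<bar>a x\<bar> + \<bar>u x\<bar>"])
  have sp: "space M = \<Omega>" by (rule space_eq[OF assms(1)])
  show "u \<in> borel_measurable M" using assms(2) by blast
  show "v n \<in> borel_measurable M" for n by (rule meas_cont[OF assms(1,4)])
  show "integrable M (\<lambda>x. \<bar>a x\<bar> + \<bar>u x\<bar>)" using assms(2,3) by auto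
  show "AE x in M. (\<lambda>n. v n x) \<longlonglongrightarrow> u x" using assms(5) sp by (intro AE_I2) auto
  show "AE x in M. norm (v n x) \<le> \<bar>a x\<bar> + \<bar>u x\<bar>" for n
  proof (intro AE_I2)
    fix x assume "x \<in> space M"
    then have "x \<in> \<Omega>" using sp by simp
    then show "norm (v n x) \<le> \<bar>a x\<bar> + \<bar>u x\<bar>" using assms(6,7)[of x n] by auto
  qed
qed

lemma approx_main:
  fixes \<Omega> K :: "'a::euclidean_space set" and \<mu>p \<mu>m :: "'a measure" and u :: "'a \<Rightarrow> real"
  assumes bO: "bounded \<Omega>" and oO: "open \<Omega>" and neO: "\<Omega> \<noteq> {}" and K0: "0 \<in> interior K"
    and pp: "prob_space \<mu>p" and pm: "prob_space \<mu>m"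
    and sp: "sets \<mu>p = sets (restrict_space borel \<Omega>)"
    and sm: "sets \<mu>m = sets (restrict_space borel \<Omega>)"
    and adv: "\<And>w. w \<in> admissible \<Omega> K \<Longrightarrow> integral\<^sup>L \<mu>m w - integral\<^sup>L \<mu>p w \<le> 0"
    and cu: "convex_on \<Omega> u" and ip: "integrable \<mu>p u" and im: "integrable \<mu>m u"
  shows "integral\<^sup>L \<mu>m u - integral\<^sup>L \<mu>p u \<le> 0"
proof -
  have cvxO: "convex \<Omega>" using cu convex_on_def by blast
  have cont: "continuous_on \<Omega> u" using convex_on_continuous[OF oO cu] .
  from countable_dense_setE obtain DD :: "'a set" where DD: "countable DD"
    "\<And>U. open U \<Longrightarrow> U \<noteq> {} \<Longrightarrow> \<exists>y\<in>DD. y \<in> U" by blast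
  define D' where "D' = DD \<inter> \<Omega>"
  have D'ne: "D' \<noteq> {}" using DD(2)[OF oO neO] unfolding D'_def by blast
  have cD': "countable D'" using DD(1) unfolding D'_def by simp
  define d where "d = from_nat_into D'"
  have dO: "d k \<in> \<Omega>" for k using from_nat_into[OF D'ne, of k] unfolding d_def D'_def by blast
  have ddense: "\<exists>k. dist (d k) x < e" if "x \<in> \<Omega>" "e > 0" for x e
  proof -
    have "open (ball x e \<inter> \<Omega>)" using oO by auto
    moreover have "x \<in> ball x e \<inter> \<Omega>" using that by simp
    then have "ball x e \<inter> \<Omega> \<noteq> {}" by blast
    ultimately obtain y where y: "y \<in> DD" "y \<in> ball x e \<inter> \<Omega>" using DD(2) by blast
    then have "y \<in> range d" unfolding d_def using range_from_nat_into[OF D'ne cD'] D'_def by blast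
    then obtain k where "y = d k" by blast
    then show ?thesis using y by (auto simp: dist_commute)
  qed
  have "\<forall>k. \<exists>s. \<forall>x\<in>\<Omega>. u (d k) + s \<bullet> (x - d k) \<le> u x"
    using subgrad[OF oO cu dO] by blast
  then obtain s where s: "\<And>k x. x \<in> \<Omega> \<Longrightarrow> u (d k) + s k \<bullet> (x - d k) \<le> u x"
    by metis
  define c where "c k = u (d k) - s k \<bullet> d k" for k
  have aff: "s k \<bullet> x + c k = u (d k) + s k \<bullet> (x - d k)" for k x
    by (simp add: c_def inner_diff_right)
  define v where "v n x = Max ((\<lambda>k. s k \<bullet> x + c k) ` {..n})" for n x
  have vge: "s k \<bullet> x + c k \<le> v n x" if "k \<le> n" for k n x
    unfolding v_def using that by (intro Max_ge) auto
  have vle: "v n x \<le> u x" if "x \<in> \<Omega>" for n x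
    unfolding v_def using s[OF that] aff by (subst Max_le_iff) auto
  have vmono: "v m x \<le> v n x" if "m \<le> n" for m n x
    unfolding v_def using that by (intro Max_mono) auto
  have vcont: "continuous_on \<Omega> (v n)" for n
    using continuous_on_subset[OF cont_Max[of s c n]] unfolding v_def by auto
  have vconv: "(\<lambda>n. v n x) \<longlonglongrightarrow> u x" if xO: "x \<in> \<Omega>" for x
  proof -
    obtain e where e: "e > 0" "cball x e \<subseteq> \<Omega>" using oO xO open_contains_cball by blast
    define \<delta> where "\<delta> = e / 2"
    have dpos: "\<delta> > 0" using e by (simp add: \<delta>_def)
    have cb: "cball x (2 * \<delta>) \<subseteq> \<Omega>" using e by (simp add: \<delta>_def)
    have "compact (u ` cball x (2 * \<delta>))"
      by (intro compact_continuous_image continuous_on_subset[OF cont cb]) auto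
    then obtain M where M: "\<forall>y\<in>cball x (2 * \<delta>). \<bar>u y\<bar> \<le> M"
      using compact_imp_bounded bounded_iff by (metis image_eqI real_norm_def)
    have M0: "0 \<le> M" using M dpos by (metis abs_ge_zero centre_in_cball less_eq_real_def mult_pos_pos zero_less_numeral order_trans)
    have sbound: "\<delta> * norm (s k) \<le> 2 * M" if dk: "dist (d k) x < \<delta>" for k
    proof (cases "s k = 0")
      case True then show ?thesis using M0 by simp
    next
      case False
      define y where "y = d k + (\<delta> / norm (s k)) *\<^sub>R s k"
      have "dist y x \<le> dist y (d k) + dist (d k) x" by (rule dist_triangle)
      also have "dist y (d k) = \<delta>" using False dpos by (simp add: y_def dist_norm)
      finally have "dist y x \<le> 2 * \<delta>" using dk by simp
      then have yc: "y \<in> cball x (2 * \<delta>)" by (simp add: dist_commute)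
      have dkc: "d k \<in> cball x (2 * \<delta>)" using dk dpos by (simp add: dist_commute)
      have "s k \<bullet> (y - d k) = \<delta> * norm (s k)"
        using False by (simp add: y_def inner_commute power2_norm_eq_inner[symmetric] power2_eq_square)
      moreover have "u (d k) + s k \<bullet> (y - d k) \<le> u y" using s[of y k] yc cb by blast
      moreover have "\<bar>u y\<bar> \<le> M" "\<bar>u (d k)\<bar> \<le> M" using M yc dkc by auto
      ultimately show ?thesis by linarith
    qed
    show ?thesis
    proof (rule LIMSEQ_I)
      fix r :: real assume r: "r > 0"
      have "\<forall>e>0. \<exists>d>0. \<forall>x'\<in>\<Omega>. dist x' x < d \<longrightarrow> dist (u x') (u x) < e"
        using cont xO unfolding continuous_on_iff by simp
      then obtain \<rho> where \<rho>: "\<rho> > 0" "\<forall>x'\<in>\<Omega>. dist x' x < \<rho> \<longrightarrow> dist (u x') (u x) < r / 2"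
        using r by (meson half_gt_zero)
      define \<eta> where "\<eta> = min \<delta> (min \<rho> (r * \<delta> / (4 * (M + 1))))"
      have epos: "\<eta> > 0" using dpos \<rho> r M0 by (simp add: \<eta>_def)
      obtain k where k: "dist (d k) x < \<eta>" using ddense[OF xO epos] by blast
      have k1: "dist (d k) x < \<delta>" "dist (d k) x < \<rho>" "dist (d k) x < r * \<delta> / (4 * (M + 1))"
        using k by (auto simp: \<eta>_def)
      have uk: "\<bar>u (d k) - u x\<bar> < r / 2" using \<rho>(2) dO k1(2) by (auto simp: dist_real_def)
      have sb: "\<delta> * norm (s k) \<le> 2 * M" by (rule sbound[OF k1(1)])
      have "\<bar>s k \<bullet> (x - d k)\<bar> \<le> norm (s k) * norm (x - d k)" by (rule Cauchy_Schwarz_ineq2)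
      also have "\<dots> = norm (s k) * dist (d k) x" by (simp add: dist_norm norm_minus_commute)
      also have "\<dots> \<le> norm (s k) * (r * \<delta> / (4 * (M + 1)))"
        using k1(3) by (intro mult_left_mono) auto
      also have "\<dots> = (\<delta> * norm (s k)) * r / (4 * (M + 1))" by simp
      also have "\<dots> \<le> (2 * M) * r / (4 * (M + 1))"
        using sb r M0 by (intro divide_right_mono mult_right_mono) auto
      also have "\<dots> < r / 2"
        using r M0 by (simp add: field_simps)
      finally have sk: "\<bar>s k \<bullet> (x - d k)\<bar> < r / 2" .
      have ak: "u x - r < s k \<bullet> x + c k" using aff[of k x] uk sk by linarith
      show "\<exists>no. \<forall>n\<ge>no. norm (v n x - u x) < r"
      proof (intro exI allI impI)
        fix n assume "k \<le> n"
        then have "s k \<bullet> x + c k \<le> v n x" by (rule vge)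
        then show "norm (v n x - u x) < r" using ak vle[OF xO, of n] by simp
      qed
    qed
  qed
  obtain B where B: "\<forall>x\<in>\<Omega>. norm x \<le> B" using bO bounded_iff by blast
  have a0int: "integrable M (\<lambda>x. s 0 \<bullet> x + c 0)"
    if "prob_space M" "sets M = sets (restrict_space borel \<Omega>)" for M
  proof (rule int_bounded_cont[OF that])
    show "continuous_on \<Omega> (\<lambda>x. s 0 \<bullet> x + c 0)" by (intro continuous_intros)
    show "\<forall>x\<in>\<Omega>. \<bar>s 0 \<bullet> x + c 0\<bar> \<le> norm (s 0) * B + \<bar>c 0\<bar>"
    proof
      fix x assume "x \<in> \<Omega>"
      have "\<bar>s 0 \<bullet> x\<bar> \<le> norm (s 0) * norm x" by (rule Cauchy_Schwarz_ineq2)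
      also have "\<dots> \<le> norm (s 0) * B" using B \<open>x \<in> \<Omega>\<close> by (intro mult_left_mono) auto
      finally show "\<bar>s 0 \<bullet> x + c 0\<bar> \<le> norm (s 0) * B + \<bar>c 0\<bar>" by linarith
    qed
  qed
  have v0: "s 0 \<bullet> x + c 0 \<le> v n x" for n x by (rule vge) simp
  have limp: "(\<lambda>n. integral\<^sup>L \<mu>p (v n)) \<longlonglongrightarrow> integral\<^sup>L \<mu>p u"
    by (intro dc_lemma[OF sp ip a0int[OF pp sp] vcont vconv] v0 vle)
  have limm: "(\<lambda>n. integral\<^sup>L \<mu>m (v n)) \<longlonglongrightarrow> integral\<^sup>L \<mu>m u"
    by (intro dc_lemma[OF sm im a0int[OF pm sm] vcont vconv] v0 vle)
  obtain r where r: "r > 0" "ball 0 r \<subseteq> K" using K0 mem_interior by blast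
  have step: "integral\<^sup>L \<mu>m (v n) - integral\<^sup>L \<mu>p (v n) \<le> 0" for n
  proof -
    define S where "S = (\<Sum>k\<le>n. norm (s k))"
    have S0: "S \<ge> 0" unfolding S_def by (intro sum_nonneg) auto
    define t where "t = r / (1 + S)"
    have tpos: "t > 0" using r S0 by (simp add: t_def)
    have tK: "t *\<^sub>R s k \<in> K" if "k \<le> n" for k
    proof -
      have "norm (s k) \<le> S" unfolding S_def using that
        by (intro member_le_sum) auto
      then have "t * norm (s k) \<le> t * S" using tpos by (intro mult_left_mono) auto
      also have "\<dots> < t * (1 + S)" using tpos by simp
      also have "\<dots> = r" using S0 by (simp add: t_def)
      finally have "norm (t *\<^sub>R s k) < r" using tpos by simp
      then show ?thesis using r(2) by auto
    qed
    have eqv: "(\<lambda>x. t * v n x) = (\<lambda>x. Max ((\<lambda>k. (t *\<^sub>R s k) \<bullet> x + t * c k) ` {..n}))"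
    proof
      fix x
      have "mono ((*) t)" using tpos by (auto intro!: monoI mult_left_mono)
      then have "t * v n x = Max ((*) t ` ((\<lambda>k. s k \<bullet> x + c k) ` {..n}))"
        unfolding v_def by (intro mono_Max_commute) auto
      also have "\<dots> = Max ((\<lambda>k. (t *\<^sub>R s k) \<bullet> x + t * c k) ` {..n})"
        by (simp add: image_image algebra_simps)
      finally show "t * v n x = Max ((\<lambda>k. (t *\<^sub>R s k) \<bullet> x + t * c k) ` {..n})" .
    qed
    have "(\<lambda>x. t * v n x) \<in> admissible \<Omega> K"
      unfolding eqv by (intro maxaff_adm tK cvxO)
    then have "integral\<^sup>L \<mu>m (\<lambda>x. t * v n x) - integral\<^sup>L \<mu>p (\<lambda>x. t * v n x) \<le> 0" by (rule adv)
    then have "t * (integral\<^sup>L \<mu>m (v n) - integral\<^sup>L \<mu>p (v n)) \<le> 0"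
      by (simp add: right_diff_distrib)
    then show ?thesis using tpos by (simp add: mult_le_0_iff)
  qed
  have "(\<lambda>n. integral\<^sup>L \<mu>m (v n) - integral\<^sup>L \<mu>p (v n)) \<longlonglongrightarrow> integral\<^sup>L \<mu>m u - integral\<^sup>L \<mu>p u"
    by (intro tendsto_diff limm limp)
  then show ?thesis by (rule LIMSEQ_le_const2) (use step in auto)
qed

theorem proposition2:
  fixes \<Omega> K :: "'a::euclidean_space set" and \<mu>p \<mu>m :: "'a measure"
  assumes "bounded \<Omega>" "open \<Omega>" "convex \<Omega>"
    and "compact K" "0 \<in> interior K"
    and "prob_space \<mu>p" "sets \<mu>p = sets (restrict_space borel \<Omega>)"
    and "prob_space \<mu>m" "sets \<mu>m = sets (restrict_space borel \<Omega>)"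
  shows "VDC \<Omega> K \<mu>p \<mu>m = 0 \<longleftrightarrow>
    (\<forall>u. convex_on \<Omega> u \<and> integrable \<mu>p u \<and> integrable \<mu>m u \<longrightarrow>
         integral\<^sup>L \<mu>m u - integral\<^sup>L \<mu>p u \<le> 0)"
proof -
  have spO: "space \<mu>p = \<Omega>" by (rule space_eq[OF assms(7)])
  have neO: "\<Omega> \<noteq> {}" using prob_space.not_empty[OF assms(6)] spO by simp
  have zadm: "(\<lambda>_. 0) \<in> admissible \<Omega> K"
  proof -
    have "0 \<in> K" using assms(5) interior_subset by blast
    moreover have "((\<lambda>_. 0::real) has_derivative (\<lambda>h. 0 \<bullet> h)) (at x)" for x :: 'a
      by (simp add: has_derivative_const)
    ultimately have "\<exists>g\<in>K. ((\<lambda>_. 0::real) has_derivative (\<lambda>h. g \<bullet> h)) (at x)" for x by blast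
    then have "AE x in lebesgue. x \<in> \<Omega> \<longrightarrow> (\<exists>g\<in>K. ((\<lambda>_. 0::real) has_derivative (\<lambda>h. g \<bullet> h)) (at x))"
      by (intro AE_I2) blast
    then show ?thesis unfolding admissible_def
      using assms(3) by (simp add: convex_on_const)
  qed
  have V0: "VDC \<Omega> K \<mu>p \<mu>m \<ge> 0"
    unfolding VDC_def by (rule SUP_upper2[OF zadm]) simp
  show ?thesis
  proof
    assume V: "VDC \<Omega> K \<mu>p \<mu>m = 0"
    have adv: "integral\<^sup>L \<mu>m w - integral\<^sup>L \<mu>p w \<le> 0" if "w \<in> admissible \<Omega> K" for w
    proof -
      have "ereal (integral\<^sup>L \<mu>m w - integral\<^sup>L \<mu>p w) \<le> VDC \<Omega> K \<mu>p \<mu>m"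
        unfolding VDC_def by (rule SUP_upper[OF that])
      then show ?thesis using V by simp
    qed
    show "\<forall>u. convex_on \<Omega> u \<and> integrable \<mu>p u \<and> integrable \<mu>m u \<longrightarrow>
         integral\<^sup>L \<mu>m u - integral\<^sup>L \<mu>p u \<le> 0"
      using approx_main[OF assms(1,2) neO assms(5,6,8,7,9) adv] by blast
  next
    assume H: "\<forall>u. convex_on \<Omega> u \<and> integrable \<mu>p u \<and> integrable \<mu>m u \<longrightarrow>
         integral\<^sup>L \<mu>m u - integral\<^sup>L \<mu>p u \<le> 0"
    have "VDC \<Omega> K \<mu>p \<mu>m \<le> 0"
      unfolding VDC_def
    proof (rule SUP_least)
      fix u assume ua: "u \<in> admissible \<Omega> K"
      have cu: "convex_on \<Omega> u" using ua unfolding admissible_def by simp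
      have cont: "continuous_on \<Omega> u" using convex_on_continuous[OF assms(2) cu] .
      obtain C where C: "\<forall>x\<in>\<Omega>. \<bar>u x\<bar> \<le> C" using adm_bounded[OF assms(1,2) neO assms(4) ua] by blast
      have "integrable \<mu>p u" by (rule int_bounded_cont[OF assms(6,7) cont C])
      moreover have "integrable \<mu>m u" by (rule int_bounded_cont[OF assms(8,9) cont C])
      ultimately have "integral\<^sup>L \<mu>m u - integral\<^sup>L \<mu>p u \<le> 0" using H cu by blast
      then show "ereal (integral\<^sup>L \<mu>m u - integral\<^sup>L \<mu>p u) \<le> 0" by simp
    qed
    then show "VDC \<Omega> K \<mu>p \<mu>m = 0" using V0 by simp
  qed
qed

end
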